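(* Let $n \ge 1$ and let $v_1,\dots,v_n > 0$. Consider the tit-for-tat dynamic on players $N=\{1,\dots,n\}$ with values $v_1,\dots,v_n$, started from a non-degenerate configuration: $x_i(0)>0$ for all $i$, and $y_{i,j}(0)>0$ for all $i,j$ with $\sum_{j=1}^n y_{i,j}(0)=1$ for each $i$. Let $v^* = \max_{k\in[n]} v_k$. Let $i$ be any player and $j$ any player with $v_j < v^*$. Then $\lim_{t\to\infty} y_{i,j}(t) = 0$.
   Context: Tit-for-tat dynamic: there are $n$ players; player $i$ produces good $i$, and each unit of good $j$ used as input by any player yields $v_j$ units of that player's own good. At time $t$, player $i$ holds an amount $x_i(t)$ of good $i$ and allocates it according to fractions $y_{i,j}(t)\ge 0$, $\sum_j y_{i,j}(t)=1$ ($y_{i,j}(t)$ is the fraction of good $i$ given to player $j$). At each time $t$: (Exchange) every player $i$ receives $w_{i,j}(t) = y_{j,i}(t)\, x_j(t)$ units of each good $j$; (Production) $x_i(t+1) = \sum_{j=1}^n v_j\, w_{i,j}(t)$; (Fractions update) $y_{i,j}(t+1) = \dfrac{v_j\, w_{i,j}(t)}{x_i(t+1)}$. *)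

theory Defs
  imports "HOL-Analysis.Analysis"
begin

text \<open>Tit-for-tat dynamic. Players are 0, ..., n-1. A state is a pair (x, y) with
  x i the amount of good i held by player i and y i j the fraction of good i given to j.\<close>

definition tft_step :: "nat \<Rightarrow> (nat \<Rightarrow> real) \<Rightarrow> (nat \<Rightarrow> real) \<times> (nat \<Rightarrow> nat \<Rightarrow> real)
    \<Rightarrow> (nat \<Rightarrow> real) \<times> (nat \<Rightarrow> nat \<Rightarrow> real)" where
  "tft_step n v s =
    (let x = fst s; y = snd s;
         w = (\<lambda>i j. y j i * x j);
         x' = (\<lambda>i. \<Sum>j<n. v j * w i j)
     in (x', (\<lambda>i j. v j * w i j / x' i)))"

fun tft :: "nat \<Rightarrow> (nat \<Rightarrow> real) \<Rightarrow> (nat \<Rightarrow> real) \<Rightarrow> (nat \<Rightarrow> nat \<Rightarrow> real)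
    \<Rightarrow> nat \<Rightarrow> (nat \<Rightarrow> real) \<times> (nat \<Rightarrow> nat \<Rightarrow> real)" where
  "tft n v x0 y0 0 = (x0, y0)"
| "tft n v x0 y0 (Suc t) = tft_step n v (tft n v x0 y0 t)"

definition tft_x where "tft_x n v x0 y0 t = fst (tft n v x0 y0 t)"
definition tft_y where "tft_y n v x0 y0 t = snd (tft n v x0 y0 t)"

end

theory Submission
  imports Defs "HOL-Probability.Characteristic_Functions"
begin

lemma tft_Suc_x: "tft_x n v x0 y0 (Suc t) = (\<lambda>i. \<Sum>j<n. v j * (tft_y n v x0 y0 t j i * tft_x n v x0 y0 t j))"
  by (simp add: tft_x_def tft_y_def tft_step_def Let_def)

lemma tft_Suc_y: "tft_y n v x0 y0 (Suc t) = (\<lambda>i j. v j * (tft_y n v x0 y0 t j i * tft_x n v x0 y0 t j) / tft_x n v x0 y0 (Suc t) i)"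
  by (simp add: tft_x_def tft_y_def tft_step_def Let_def)

theorem corollary1:
  fixes n :: nat and v x0 :: "nat \<Rightarrow> real" and y0 :: "nat \<Rightarrow> nat \<Rightarrow> real"
    and i j :: nat
  assumes "n \<ge> 1"
    and "\<And>k. k < n \<Longrightarrow> v k > 0"
    and "\<And>k. k < n \<Longrightarrow> x0 k > 0"
    and "\<And>k l. k < n \<Longrightarrow> l < n \<Longrightarrow> y0 k l > 0"
    and "\<And>k. k < n \<Longrightarrow> (\<Sum>l<n. y0 k l) = 1"
    and "i < n" and "j < n"
    and "v j < Max (v ` {..<n})"
  shows "(\<lambda>t. tft_y n v x0 y0 t i j) \<longlonglongrightarrow> 0"
proof -
  define X where "X = tft_x n v x0 y0"
  define Y where "Y = tft_y n v x0 y0"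
  define b where "b t a c = Y t a c * X t a" for t a c
  have X0: "X 0 = x0" and Y0: "Y 0 = y0" by (simp_all add: X_def Y_def tft_x_def tft_y_def)
  have XS: "X (Suc t) a = (\<Sum>l<n. v l * (Y t l a * X t l))" for t a
    unfolding X_def Y_def by (simp add: tft_Suc_x)
  have YS: "Y (Suc t) a c = v c * (Y t c a * X t c) / X (Suc t) a" for t a c
    unfolding X_def Y_def by (simp add: tft_Suc_y)
  have pos: "(\<forall>a<n. X t a > 0) \<and> (\<forall>a<n. \<forall>c<n. Y t a c > 0)" for t
  proof (induction t)
    case 0 then show ?case using assms(3,4) by (simp add: X0 Y0)
  next
    case (Suc t)
    have xp: "X (Suc t) a > 0" if "a < n" for a
      unfolding XS
    proof (rule sum_pos)
      show "finite {..<n}" by simp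
      show "{..<n} \<noteq> {}" using assms(1) by (auto simp: lessThan_empty_iff)
      show "\<And>l. l \<in> {..<n} \<Longrightarrow> 0 < v l * (Y t l a * X t l)"
        using Suc.IH assms(2) that by auto
    qed
    moreover have "Y (Suc t) a c > 0" if "a < n" "c < n" for a c
      unfolding YS using xp[OF that(1)] Suc.IH assms(2) that by auto
    ultimately show ?case by auto
  qed
  have bS: "b (Suc t) a c = v c * b t c a" if "a < n" for t a c
  proof -
    have "X (Suc t) a \<noteq> 0" using pos[of "Suc t"] that by auto
    then show ?thesis unfolding b_def YS by simp
  qed
  have bpos: "b t a c > 0" if "a < n" "c < n" for t a c
    using pos[of t] that unfolding b_def by auto
  have Xsum: "X t a = (\<Sum>l<n. b t a l)" if "a < n" for t a
  proof (cases t)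
    case 0 then show ?thesis using assms(5)[OF that]
      by (simp add: b_def X0 Y0 flip: sum_distrib_right)
  next
    case (Suc s)
    have "X t a = (\<Sum>l<n. v l * (Y s l a * X s l))" using Suc XS by simp
    also have "\<dots> = (\<Sum>l<n. v l * b s l a)" by (simp add: b_def)
    also have "\<dots> = (\<Sum>l<n. b t a l)" using bS[OF that, of s] Suc by simp
    finally show ?thesis .
  qed
  have yb: "Y t a c = b t a c / X t a" if "a < n" for t a c
    using pos[of t] that unfolding b_def by auto
  have closedA: "\<forall>a<n. \<forall>c<n. b (2*t) a c = (v a * v c)^t * b 0 a c \<and> b (2*t+1) a c = v c * (v a * v c)^t * b 0 c a" for t
  proof (induction t)
    case 0 show ?case using bS by simp
  next
    case (Suc t)
    show ?case
    proof (intro allI impI)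
      fix a c assume ac: "a < n" "c < n"
      have e1: "b (2*Suc t) a c = v c * b (2*t+1) c a"
        using bS[OF ac(1), of "2*t+1" c] by simp
      have e: "b (2*Suc t) a c = (v a * v c)^(Suc t) * b 0 a c"
        if ac: "a < n" "c < n" for a c
      proof -
        have "b (2*Suc t) a c = v c * b (2*t+1) c a"
          using bS[OF ac(1), of "2*t+1" c] by simp
        also have "\<dots> = v c * (v a * (v c * v a)^t * b 0 a c)" using Suc ac by simp
        finally show ?thesis by (simp add: algebra_simps)
      qed
      have "b (2*Suc t+1) a c = v c * b (2*Suc t) c a"
        using bS[OF ac(1), of "2*Suc t" c] by simp
      also have "\<dots> = v c * ((v c * v a)^(Suc t) * b 0 c a)" using e[of c a] ac by simp
      finally show "b (2*Suc t) a c = (v a * v c)^(Suc t) * b 0 a c \<and> b (2*Suc t+1) a c = v c * (v a * v c)^(Suc t) * b 0 c a"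
        using e[OF ac] by (simp add: algebra_simps)
    qed
  qed
  have closed: "b (2*t) a c = (v a * v c)^t * b 0 a c \<and> b (2*t+1) a c = v c * (v a * v c)^t * b 0 c a"
    if "a < n" "c < n" for t a c using closedA that by blast
  obtain k where k: "k < n" "v k = Max (v ` {..<n})"
  proof -
    have "Max (v ` {..<n}) \<in> v ` {..<n}" using assms(1) by (intro Max_in) (auto simp: lessThan_empty_iff)
    then show ?thesis using that by auto
  qed
  have vk: "v k > 0" "v j > 0" "v i > 0" using assms(2)[OF k(1)] assms(2)[OF assms(6)] assms(2)[OF assms(7)] by auto
  define r where "r = v j / v k"
  have r: "0 < r" "r < 1" using vk assms(8) k unfolding r_def by auto
  have bound: "Y t i j \<le> b t i j / b t i k" for t
  proof -
    have "b t i k \<le> X t i" unfolding Xsum[OF assms(6)]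
      by (rule member_le_sum) (use bpos assms(6) k in \<open>auto intro: less_imp_le\<close>)
    then show ?thesis unfolding yb[OF assms(6)]
      using bpos[OF assms(6,7), of t] bpos[OF assms(6) k(1), of t]
      by (intro divide_left_mono) (auto intro: less_imp_le mult_pos_pos)
  qed
  have Ynn: "Y t i j \<ge> 0" for t using pos[of t] assms(6,7) by (auto intro: less_imp_le)
  have ev: "(\<lambda>t. Y (2*t) i j) \<longlonglongrightarrow> 0"
  proof (rule tendsto_sandwich[OF _ _ tendsto_const])
    have "b (2*t) i j / b (2*t) i k = r^t * (b 0 i j / b 0 i k)" for t
      using closed[OF assms(6,7), of t] closed[OF assms(6) k(1), of t] vk
      by (simp add: r_def power_divide power_mult_distrib)
    moreover have "(\<lambda>t. r^t * (b 0 i j / b 0 i k)) \<longlonglongrightarrow> 0 * (b 0 i j / b 0 i k)"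
      by (intro tendsto_mult tendsto_const LIMSEQ_power_zero) (use r in auto)
    ultimately show "(\<lambda>t. b (2*t) i j / b (2*t) i k) \<longlonglongrightarrow> 0" by simp
    show "\<forall>\<^sub>F t in sequentially. 0 \<le> Y (2*t) i j" using Ynn by simp
    show "\<forall>\<^sub>F t in sequentially. Y (2*t) i j \<le> b (2*t) i j / b (2*t) i k" using bound by simp
  qed
  have od: "(\<lambda>t. Y (2*t+1) i j) \<longlonglongrightarrow> 0"
  proof (rule tendsto_sandwich[OF _ _ tendsto_const])
    have "b (2*t+1) i j / b (2*t+1) i k = r^t * (v j * b 0 j i / (v k * b 0 k i))" for t
      using closed[OF assms(6,7), of t] closed[OF assms(6) k(1), of t] vk
      by (simp add: r_def power_divide power_mult_distrib mult_ac)
    moreover have "(\<lambda>t. r^t * (v j * b 0 j i / (v k * b 0 k i))) \<longlonglongrightarrow> 0 * (v j * b 0 j i / (v k * b 0 k i))"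
      by (intro tendsto_mult tendsto_const LIMSEQ_power_zero) (use r in auto)
    ultimately show "(\<lambda>t. b (2*t+1) i j / b (2*t+1) i k) \<longlonglongrightarrow> 0" by simp
    show "\<forall>\<^sub>F t in sequentially. 0 \<le> Y (2*t+1) i j" using Ynn by simp
    show "\<forall>\<^sub>F t in sequentially. Y (2*t+1) i j \<le> b (2*t+1) i j / b (2*t+1) i k" using bound by simp
  qed
  from limseq_even_odd[OF ev od] show ?thesis unfolding Y_def .
qed

end
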